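(* Fix $\varepsilon>0$, $\beta\in(0,1)$, an even integer $d>4(e^{2\varepsilon}-1)^2\ln\frac2\beta$, and $\varepsilon$-private randomizers $R_1,\dots,R_n:[d]\to\mathcal Y$. Let $v=(e^{2\varepsilon}-1)\sqrt{\frac4d\ln\frac2\beta}$. If $H$ is chosen uniformly among subsets of $[d]$ of size $d/2$, then with probability at least $5/6$ over $H$, \[ \forall i\in[n]:\quad \Pr\left[R_i(\mathbf U)\in \mathit{Leak}(v,H,R_i)\right]<6\beta n . \]
   Context: $\mathcal Y$ is a countable message set. A randomizer $R:[d]\to\mathcal Y$ is $\varepsilon$-private if for all $x,x'\in[d]$ and all $Y\subseteq\mathcal Y$, $\Pr[R(x)\in Y]\le e^{\varepsilon}\Pr[R(x')\in Y]$. $\mathbf U$ is the uniform distribution on $[d]$; for $H\subseteq[d]$, $\mathbf U_H$ is the uniform distribution on $H$; $R(\mathbf U)$, $R(\mathbf U_H)$ are the distributions of $R(\hat x)$ for $\hat x\sim\mathbf U$, resp. $\hat x\sim\mathbf U_H$. For $H\subset[d]$ with $|H|=d/2$, a message $y$ is $v$-leaky with respect to $H,R$ if $\left|\ln\frac{\Pr[R(\mathbf U_H)=y]}{\Pr[R(\mathbf U)=y]}\right|>v$ (messages with $\Pr[R(\mathbf U)=y]=0$ are regarded as not leaky), and $\mathit{Leak}(v,H,R)$ is the set of $y\in\mathcal Y$ that are $v$-leaky with respect to $H,R$. *)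

theory Defs
  imports "HOL-Probability.Probability"
begin

text \<open>[d] is rendered as {1..d}. A randomizer R : [d] -> Y is a map nat => 'y pmf
  (only its values on {1..d} matter); 'y is a countable message type.\<close>

definition eps_private :: "real \<Rightarrow> nat \<Rightarrow> (nat \<Rightarrow> 'y::countable pmf) \<Rightarrow> bool" where
  "eps_private \<epsilon> d R \<longleftrightarrow>
     (\<forall>x\<in>{1..d}. \<forall>x'\<in>{1..d}. \<forall>Y.
        measure_pmf.prob (R x) Y \<le> exp \<epsilon> * measure_pmf.prob (R x') Y)"

text \<open>R(U_H): distribution of R(x) for x uniform on H; R(U) = R(U_{[d]}).\<close>
definition out_dist :: "(nat \<Rightarrow> 'y pmf) \<Rightarrow> nat set \<Rightarrow> 'y pmf" where
  "out_dist R H = bind_pmf (pmf_of_set H) R"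

text \<open>y is v-leaky wrt H,R: Pr[R(U)=y] > 0 and |ln(Pr[R(U_H)=y]/Pr[R(U)=y])| > v,
  where the log-ratio is +-infinity (hence leaky) when Pr[R(U_H)=y] = 0.\<close>
definition Leak :: "real \<Rightarrow> nat \<Rightarrow> nat set \<Rightarrow> (nat \<Rightarrow> 'y pmf) \<Rightarrow> 'y set" where
  "Leak v d H R = {y. pmf (out_dist R {1..d}) y > 0 \<and>
      (pmf (out_dist R H) y = 0 \<or>
       \<bar>ln (pmf (out_dist R H) y / pmf (out_dist R {1..d}) y)\<bar> > v)}"

end

theory Submission
  imports Defs "HOL-Combinatorics.Permutations"
begin

lemma numerics:
  fixes \<epsilon> \<beta> v u :: real and d k :: nat
  assumes eps: "\<epsilon> > 0" and b0: "0 < \<beta>" and b1: "\<beta> < 1" and dk: "d = 2*k"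
    and dbig: "real d > 4 * (exp (2 * \<epsilon>) - 1)^2 * ln (2 / \<beta>)"
  defines "v \<equiv> (exp (2 * \<epsilon>) - 1) * sqrt (4 / real d * ln (2 / \<beta>))"
  defines "u \<equiv> 1 - exp (-v)"
  shows "k > 0" "v \<ge> 0" "u \<ge> 0" "2 * exp (- (2*k) * u^2 / (exp (2*\<epsilon>) - 1)^2) \<le> \<beta>"
proof -
  define L where "L = ln (2 / \<beta>)"
  have L: "L > 0" unfolding L_def using b0 b1 by simp
  have e2: "exp (2*\<epsilon>) > 1" using eps by simp
  have E: "(exp (2 * \<epsilon>) - 1)^2 > 0" using e2 by simp
  have "4 * (exp (2 * \<epsilon>) - 1)^2 * L > 0" using E L by simp
  hence dpos: "real d > 0" using dbig unfolding L_def by linarith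
  thus "k > 0" using dk by simp
  have dbig': "real d > 4 * (exp (2 * \<epsilon>) - 1)^2 * L" using dbig unfolding L_def .
  have vL: "v = (exp (2 * \<epsilon>) - 1) * sqrt (4 / real d * L)" unfolding v_def L_def ..
  have arg: "4 / real d * L \<ge> 0" using dpos L by simp
  show v0: "v \<ge> 0" unfolding vL using e2 arg by simp
  have v2: "v^2 = (exp (2*\<epsilon>) - 1)^2 * (4 / real d * L)"
    unfolding vL power_mult_distrib using arg by simp
  have "v^2 * real d = 4 * (exp (2*\<epsilon>) - 1)^2 * L" using v2 dpos by (simp add: field_simps)
  hence "v^2 * real d < 1 * real d" using dbig' by simp
  hence "v^2 < 1" using dpos by (meson mult_less_cancel_right_pos)
  hence v1: "v \<le> 1" using v0 by (simp add: abs_square_less_1)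
  have uv: "u \<ge> v / 2"
  proof -
    have "exp v \<ge> 1 + v" by (rule exp_ge_add_one_self)
    hence "1 / exp v \<le> 1 / (1 + v)" using v0 by (intro divide_left_mono) auto
    hence "exp (-v) \<le> 1 / (1 + v)" by (simp add: exp_minus inverse_eq_divide)
    also have "1 / (1 + v) \<le> 1 - v/2"
    proof -
      have "v * v \<le> v" using v0 v1 by (simp add: mult_left_le)
      hence "1 \<le> (1 - v/2) * (1+v)" by (simp add: algebra_simps)
      thus ?thesis using v0 by (simp add: pos_divide_le_eq)
    qed
    finally show ?thesis unfolding u_def by simp
  qed
  show u0: "u \<ge> 0" using uv v0 by simp
  have "(v/2)^2 \<le> u^2" by (rule power_mono[OF uv]) (use v0 in simp)
  hence "real d * (v/2)^2 \<le> real d * u^2" using dpos by (simp add: mult_left_mono)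
  moreover have "real d * (v/2)^2 = (exp (2*\<epsilon>) - 1)^2 * L" using v2 dpos by (simp add: field_simps power2_eq_square)
  ultimately have "(exp (2*\<epsilon>) - 1)^2 * L \<le> (2*k) * u^2" using dk by simp
  hence "L \<le> (2*k) * u^2 / (exp (2*\<epsilon>) - 1)^2" using E by (simp add: pos_le_divide_eq mult.commute)
  hence "exp (- ((2*k) * u^2 / (exp (2*\<epsilon>) - 1)^2)) \<le> exp (-L)" by simp
  also have "exp (-L) = \<beta> / 2" unfolding L_def using b0 by (simp add: exp_minus)
  finally show "2 * exp (- (2*k) * u^2 / (exp (2*\<epsilon>) - 1)^2) \<le> \<beta>" by simp
qed


lemma perm_map_set:
  assumes "finite D" "T \<subseteq> D" "T' \<subseteq> D" "card T = card T'"
  shows "\<exists>\<tau>. \<tau> permutes D \<and> \<tau> ` T = T'"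
proof -
  have fT: "finite T" "finite T'" using assms by (auto intro: finite_subset)
  obtain f where f: "bij_betw f T T'" using finite_same_card_bij[OF fT assms(4)] by blast
  have fD: "finite (D - T)" "finite (D - T')" using assms(1) by auto
  have "card (D - T) = card D - card T" by (rule card_Diff_subset[OF fT(1) assms(2)])
  also have "\<dots> = card D - card T'" using assms(4) by simp
  also have "\<dots> = card (D - T')" by (rule card_Diff_subset[OF fT(2) assms(3), symmetric])
  finally have cD: "card (D - T) = card (D - T')" .
  obtain g where g: "bij_betw g (D - T) (D - T')" using finite_same_card_bij[OF fD cD] by blast
  define \<tau> where "\<tau> x = (if x \<in> T then f x else if x \<in> D then g x else x)" for x
  have b1: "bij_betw \<tau> T T'" using f by (rule bij_betw_cong[THEN iffD1, rotated]) (simp add: \<tau>_def)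
  have b2: "bij_betw \<tau> (D - T) (D - T')" using g by (rule bij_betw_cong[THEN iffD1, rotated]) (simp add: \<tau>_def)
  have "bij_betw \<tau> (T \<union> (D - T)) (T' \<union> (D - T'))"
    by (rule bij_betw_combine[OF b1 b2]) auto
  hence "bij_betw \<tau> D D" using assms by (simp add: Un_absorb1 Un_Diff_cancel)
  moreover have "{x. \<tau> x \<noteq> x} \<subseteq> D" using assms by (auto simp: \<tau>_def)
  ultimately have "\<tau> permutes D" by (simp add: permutes_altdef)
  moreover have "\<tau> ` T = T'" using b1 by (simp add: bij_betw_def)
  ultimately show ?thesis by blast
qed

lemma avg_perm:
  fixes f :: "nat set \<Rightarrow> real" and D :: "nat set"
  assumes D: "finite D" and S: "S = {H. H \<subseteq> D \<and> card H = m}" and T: "T \<in> S"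
  shows "real (card {\<pi>. \<pi> permutes D}) * (\<Sum>H\<in>S. f H)
       = real (card S) * (\<Sum>\<pi>\<in>{\<pi>. \<pi> permutes D}. f (\<pi> ` T))"
proof -
  let ?P = "{\<pi>. \<pi> permutes D}"
  define g where "g T = (\<Sum>\<pi>\<in>?P. f (\<pi> ` T))" for T
  have gc: "g T' = g T" if T'S: "T' \<in> S" for T'
  proof -
    obtain \<tau> where \<tau>: "\<tau> permutes D" "\<tau> ` T = T'"
      using perm_map_set[OF D, of T T'] T T'S S by auto
    have "g T = (\<Sum>\<pi>\<in>?P. f ((\<pi> \<circ> \<tau>) ` T))"
      unfolding g_def by (rule sum_permutations_compose_right[OF \<tau>(1)])
    also have "\<dots> = g T'" unfolding g_def \<tau>(2)[symmetric] by (simp add: image_image)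
    finally show ?thesis by simp
  qed
  have fS: "finite S" using D S by (auto intro: finite_subset[of _ "Pow D"])
  have "(\<Sum>H\<in>S. g H) = (\<Sum>H\<in>S. g T)" by (rule sum.cong[OF refl gc])
  hence "(\<Sum>H\<in>S. g H) = real (card S) * g T" by simp
  moreover have "(\<Sum>H\<in>S. g H) = (\<Sum>\<pi>\<in>?P. \<Sum>H\<in>S. f (\<pi> ` H))"
    unfolding g_def by (rule sum.swap)
  moreover have "(\<Sum>H\<in>S. f (\<pi> ` H)) = (\<Sum>H\<in>S. f H)" if "\<pi> \<in> ?P" for \<pi>
  proof -
    have pi: "\<pi> permutes D" using that by simp
    have inj: "inj_on ((`) \<pi>) S"
      using permutes_inj[OF pi] by (auto simp: inj_on_def inj_image_eq_iff)
    have "(`) \<pi> ` S = S"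
    proof
      show "(`) \<pi> ` S \<subseteq> S"
      proof
        fix X assume "X \<in> (`) \<pi> ` S"
        then obtain H where H: "H \<in> S" "X = \<pi> ` H" by blast
        have "\<pi> ` H \<subseteq> \<pi> ` D" using H S by auto
        hence "X \<subseteq> D" using H permutes_image[OF pi] by simp
        moreover have "card X = m" using H S card_image[OF inj_on_subset[OF permutes_inj_on[OF pi]]] by auto
        ultimately show "X \<in> S" using S by simp
      qed
      show "S \<subseteq> (`) \<pi> ` S"
      proof
        fix H assume H: "H \<in> S"
        have "H = \<pi> ` (inv \<pi> ` H)" using permutes_surj[OF pi] by (simp add: image_comp surj_iff)
        moreover have "inv \<pi> ` H \<in> S"
        proof -
          have ip: "inv \<pi> permutes D" by (rule permutes_inv[OF pi])
          have "inv \<pi> ` H \<subseteq> inv \<pi> ` D" using H S by auto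
          hence "inv \<pi> ` H \<subseteq> D" using permutes_image[OF ip] by simp
          moreover have "card (inv \<pi> ` H) = m" using H S card_image[OF inj_on_subset[OF permutes_inj_on[OF ip]]] by auto
          ultimately show ?thesis using S by simp
        qed
        ultimately show "H \<in> (`) \<pi> ` S" by blast
      qed
    qed
    thus ?thesis using sum.reindex[OF inj, of f] by simp
  qed
  ultimately show ?thesis by (simp add: mult.commute g_def)
qed



lemma pair_hoeffding:
  fixes a b :: "nat \<Rightarrow> real" and k :: nat and w t :: real
  assumes k: "k > 0" and w: "w > 0" and t: "t \<ge> 0" and ab: "\<And>j. j < k \<Longrightarrow> \<bar>a j - b j\<bar> \<le> w"
  shows "measure_pmf.prob (Pi_pmf {..<k} False (\<lambda>_. bernoulli_pmf (1/2)))
     {s. \<bar>(\<Sum>j<k. if s j then a j else b j) - (\<Sum>j<k. (a j + b j)/2)\<bar> \<ge> t}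
      \<le> 2 * exp (-2 * t^2 / (real k * w^2))"
proof -
  define M where "M = Pi_pmf {..<k} False (\<lambda>_. bernoulli_pmf (1/2))"
  define X where "X j s = (if s j then a j else b j)" for j and s :: "nat \<Rightarrow> bool"
  define lo where "lo j = (a j + b j)/2 - w/2" for j
  define hi where "hi j = (a j + b j)/2 + w/2" for j
  have EX: "measure_pmf.expectation M (X j) = (a j + b j)/2" if "j < k" for j
  proof -
    have "measure_pmf.expectation M (X j) = measure_pmf.expectation (map_pmf (\<lambda>f. f j) M) (\<lambda>c. if c then a j else b j)"
      by (simp add: X_def[abs_def])
    also have "map_pmf (\<lambda>f. f j) M = bernoulli_pmf (1/2)"
      unfolding M_def using that by (subst Pi_pmf_component) auto
    finally show ?thesis by simp
  qed
  interpret H: Hoeffding_ineq "measure_pmf M" "{..<k}" X lo hi "\<Sum>j<k. (a j + b j)/2"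
  proof unfold_locales
    show "prob_space.indep_vars (measure_pmf M) (\<lambda>_. borel) X {..<k}"
      unfolding M_def X_def
      by (intro prob_space.indep_vars_compose2[OF _ indep_vars_Pi_pmf])
         (auto simp: measure_pmf.prob_space_axioms)
  next
    fix j assume "j \<in> {..<k}"
    hence "\<bar>a j - b j\<bar> \<le> w" using ab by auto
    thus "AE x in measure_pmf M. X j x \<in> {lo j..hi j}"
      by (intro AE_I2) (auto simp: X_def lo_def hi_def abs_le_iff field_simps)
  next
    show "(\<Sum>j<k. (a j + b j) / 2) \<equiv> (\<Sum>i<k. measure_pmf.expectation M (X i))"
    proof -
      have "(\<Sum>j<k. (a j + b j) / 2) = (\<Sum>i<k. measure_pmf.expectation M (X i))"
        by (rule sum.cong) (simp_all add: EX)
      thus "(\<Sum>j<k. (a j + b j) / 2) \<equiv> (\<Sum>i<k. measure_pmf.expectation M (X i))" by simp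
    qed
  qed simp
  have s: "(\<Sum>i<k. (hi i - lo i)\<^sup>2) = real k * w^2" by (simp add: hi_def lo_def)
  have "measure_pmf.prob M {x \<in> space (measure_pmf M). \<bar>(\<Sum>i<k. X i x) - (\<Sum>j<k. (a j + b j)/2)\<bar> \<ge> t}
        \<le> 2 * exp (-2 * t\<^sup>2 / (\<Sum>i<k. (hi i - lo i)\<^sup>2))"
    by (rule H.Hoeffding_ineq_abs_ge[OF t]) (use k w in \<open>simp add: s\<close>)
  thus ?thesis by (simp add: s M_def X_def)
qed



lemma T0_in_S:
  "(\<lambda>j. if s j then 2*j+1 else 2*j+2) ` {..<k} \<in> {H. H \<subseteq> {1..2*k} \<and> card H = (k::nat)}"
proof -
  have inj: "inj_on (\<lambda>j. if s j then 2*j+1 else 2*j+(2::nat)) {..<k}"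
    unfolding inj_on_def by (auto split: if_splits)
  show ?thesis using card_image[OF inj] by auto
qed

lemma count_bound:
  fixes Q :: "nat set \<Rightarrow> bool" and k :: nat and \<beta> :: real
  assumes hyp: "\<And>\<pi>. \<pi> permutes {1..2*k} \<Longrightarrow>
     measure_pmf.prob (Pi_pmf {..<k} False (\<lambda>_. bernoulli_pmf (1/2)))
       {s. Q (\<pi> ` ((\<lambda>j. if s j then 2*j+1 else 2*j+2) ` {..<k}))} \<le> \<beta>"
  shows "real (card {H\<in>{H. H \<subseteq> {1..2*k} \<and> card H = k}. Q H})
           \<le> \<beta> * real (card {H. H \<subseteq> {1..2*k} \<and> card H = k})"
proof -
  define S where "S = {H. H \<subseteq> {1..2*k} \<and> card H = k}"
  define P where "P = {\<pi>. \<pi> permutes {1..2*k}}"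
  define M where "M = Pi_pmf {..<k} False (\<lambda>_. bernoulli_pmf (1/2::real))"
  define T0 where "T0 s = (\<lambda>j. if s j then 2*j+1 else 2*j+2) ` {..<k}" for s :: "nat \<Rightarrow> bool"
  define f where "f H = (if Q H then 1 else 0::real)" for H
  have fS: "finite S" unfolding S_def by (auto intro: finite_subset[of _ "Pow {1..2*k}"])
  have fP: "finite P" unfolding P_def by (rule finite_permutations) simp
  have cP: "card P > 0" using fP unfolding P_def using card_permutations[of "{1..2*k}" "2*k"] by simp
  have TS: "T0 s \<in> S" for s unfolding T0_def S_def by (rule T0_in_S)
  have eq: "real (card P) * (\<Sum>H\<in>S. f H) = real (card S) * (\<Sum>\<pi>\<in>P. f (\<pi> ` T0 s))" for s
    unfolding P_def by (rule avg_perm[of "{1..2*k}" S k]) (use TS in \<open>auto simp: S_def\<close>)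
  have int: "integrable (measure_pmf M) (\<lambda>s. f (\<pi> ` T0 s))" for \<pi>
    by (rule measure_pmf.integrable_const_bound[where B=1]) (auto simp: f_def)
  have "real (card P) * (\<Sum>H\<in>S. f H) = measure_pmf.expectation M (\<lambda>s. real (card S) * (\<Sum>\<pi>\<in>P. f (\<pi> ` T0 s)))"
    by (simp flip: eq)
  also have "\<dots> = real (card S) * (\<Sum>\<pi>\<in>P. measure_pmf.expectation M (\<lambda>s. f (\<pi> ` T0 s)))"
    using int by (simp add: integral_sum)
  also have "\<dots> \<le> real (card S) * (\<Sum>\<pi>\<in>P. \<beta>)"
  proof (intro mult_left_mono sum_mono)
    fix \<pi> assume "\<pi> \<in> P"
    have "measure_pmf.expectation M (\<lambda>s. f (\<pi> ` T0 s)) = measure_pmf.expectation M (indicator {s. Q (\<pi> ` T0 s)})"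
      by (rule Bochner_Integration.integral_cong) (auto simp: f_def indicator_def)
    also have "\<dots> = measure_pmf.prob M {s. Q (\<pi> ` T0 s)}" by simp
    also have "\<dots> \<le> \<beta>" using hyp \<open>\<pi> \<in> P\<close> by (simp add: M_def P_def T0_def)
    finally show "measure_pmf.expectation M (\<lambda>s. f (\<pi> ` T0 s)) \<le> \<beta>" .
  qed simp
  finally have "real (card P) * (\<Sum>H\<in>S. f H) \<le> real (card P) * (\<beta> * real (card S))"
    by (simp add: mult_ac)
  hence "(\<Sum>H\<in>S. f H) \<le> \<beta> * real (card S)" using cP by simp
  moreover have "(\<Sum>H\<in>S. f H) = real (card {H\<in>S. Q H})"
    using fS by (simp add: f_def sum.If_cases Int_def conj_commute)
  ultimately show ?thesis by (simp add: S_def)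
qed



lemma sum_pairs: "(\<Sum>x\<in>{1..2*k}. g x) = (\<Sum>j<k. g (2*j+1) + g (2*j+2::nat)) " for g :: "nat \<Rightarrow> real"
proof (induction k)
  case 0 then show ?case by simp
next
  case (Suc k)
  have "{1..2*Suc k} = insert (2*k+2) (insert (2*k+1) {1..2*k})" by auto
  then show ?case using Suc by (simp add: add.commute)
qed

lemma avg_bounds:
  fixes p :: "nat \<Rightarrow> real"
  assumes k: "k > 0" and priv: "\<forall>x\<in>{1..2*k}. \<forall>x'\<in>{1..2*k}. p x \<le> exp \<epsilon> * p x'"
    and x: "x \<in> {1..2*k}"
  shows "p x \<le> exp \<epsilon> * ((\<Sum>z\<in>{1..2*k}. p z) / (2*k))"
    and "exp (-\<epsilon>) * ((\<Sum>z\<in>{1..2*k}. p z) / (2*k)) \<le> p x"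
proof -
  have "(\<Sum>z\<in>{1..2*k}. p x) \<le> (\<Sum>z\<in>{1..2*k}. exp \<epsilon> * p z)"
    by (rule sum_mono) (use priv x in auto)
  hence "2*k * p x \<le> exp \<epsilon> * (\<Sum>z\<in>{1..2*k}. p z)" by (simp add: sum_distrib_left)
  thus "p x \<le> exp \<epsilon> * ((\<Sum>z\<in>{1..2*k}. p z) / (2*k))" using k by (simp add: field_simps)
  have "(\<Sum>z\<in>{1..2*k}. p z) \<le> (\<Sum>z\<in>{1..2*k}. exp \<epsilon> * p x)"
    by (rule sum_mono) (use priv x in auto)
  hence "(\<Sum>z\<in>{1..2*k}. p z) \<le> 2*k * exp \<epsilon> * p x" by simp
  hence "exp (-\<epsilon>) * (\<Sum>z\<in>{1..2*k}. p z) \<le> 2*k * p x"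
    by (simp add: exp_minus field_simps)
  thus "exp (-\<epsilon>) * ((\<Sum>z\<in>{1..2*k}. p z) / (2*k)) \<le> p x" using k by (simp add: field_simps)
qed

lemma y_bound:
  fixes p :: "nat \<Rightarrow> real" and k :: nat and \<epsilon> \<beta> u pm :: real
  assumes k: "k > 0" and eps: "\<epsilon> > 0"
    and priv: "\<forall>x\<in>{1..2*k}. \<forall>x'\<in>{1..2*k}. p x \<le> exp \<epsilon> * p x'"
    and pm: "pm = (\<Sum>x\<in>{1..2*k}. p x) / (2*k)" and pmpos: "pm > 0" and u: "u \<ge> 0"
    and key: "2 * exp (- (2*k) * u^2 / (exp (2*\<epsilon>) - 1)^2) \<le> \<beta>"
  shows "real (card {H\<in>{H. H \<subseteq> {1..2*k} \<and> card H = k}. \<bar>(\<Sum>x\<in>H. p x) - k * pm\<bar> \<ge> k * u * pm})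
           \<le> \<beta> * real (card {H. H \<subseteq> {1..2*k} \<and> card H = k})"
proof (rule count_bound)
  fix \<pi> assume pi: "\<pi> permutes {1..2*k}"
  define a where "a j = p (\<pi> (2*j+1))" for j
  define b where "b j = p (\<pi> (2*j+2))" for j
  define w where "w = (exp (2*\<epsilon>) - 1) * pm"
  have e2: "exp (2*\<epsilon>) > 1" using eps by simp
  have w: "w > 0" using e2 pmpos by (simp add: w_def)
  have inPi: "\<pi> z \<in> {1..2*k}" if "z \<in> {1..2*k}" for z
    using permutes_in_image[OF pi] that by simp
  have diff: "\<bar>p x - p x'\<bar> \<le> w" if "x \<in> {1..2*k}" "x' \<in> {1..2*k}" for x x'
  proof -
    have gen: "p y - p y' \<le> w" if "y \<in> {1..2*k}" "y' \<in> {1..2*k}" for y y'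
    proof -
      have "p y - p y' \<le> exp \<epsilon> * pm - exp (-\<epsilon>) * pm"
        using avg_bounds[OF k priv that(1)] avg_bounds[OF k priv that(2)] pm by simp
      also have "\<dots> = (exp \<epsilon> - exp (-\<epsilon>)) * pm" by (simp add: algebra_simps)
      also have "\<dots> \<le> (exp (2*\<epsilon>) - 1) * pm"
      proof (rule mult_right_mono)
        have "exp \<epsilon> * (exp \<epsilon> - exp (-\<epsilon>)) = exp (2*\<epsilon>) - 1"
          by (simp add: algebra_simps exp_minus mult_exp_exp)
        hence h: "exp (2*\<epsilon>) - 1 - (exp \<epsilon> - exp (-\<epsilon>)) = (exp \<epsilon> - 1) * (exp \<epsilon> - exp (-\<epsilon>))"
          by (simp add: algebra_simps)
        have "exp (-\<epsilon>) \<le> exp \<epsilon>" using eps by simp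
        moreover have "exp \<epsilon> \<ge> 1" using eps by simp
        ultimately have "(exp \<epsilon> - 1) * (exp \<epsilon> - exp (-\<epsilon>)) \<ge> 0" by simp
        thus "exp \<epsilon> - exp (-\<epsilon>) \<le> exp (2*\<epsilon>) - 1" using h by linarith
      qed (use pmpos in simp)
      finally show ?thesis by (simp add: w_def)
    qed
    show ?thesis using gen[OF that] gen[OF that(2,1)] by linarith
  qed
  have ab: "\<bar>a j - b j\<bar> \<le> w" if "j < k" for j
    unfolding a_def b_def by (rule diff; rule inPi) (use that in auto)
  have inj: "inj_on (\<lambda>j. \<pi> (if s j then 2*j+1 else 2*j+2)) {..<k}" for s
  proof -
    have "inj_on (\<lambda>j. if s j then 2*j+1 else 2*j+(2::nat)) {..<k}"
      unfolding inj_on_def by (auto split: if_splits)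
    moreover have "inj_on \<pi> ((\<lambda>j. if s j then 2*j+1 else 2*j+(2::nat)) ` {..<k})"
      using permutes_inj[OF pi] by (rule inj_on_subset) simp
    ultimately have "inj_on (\<pi> \<circ> (\<lambda>j. if s j then 2*j+1 else 2*j+(2::nat))) {..<k}"
      by (rule comp_inj_on)
    thus ?thesis by (simp add: o_def)
  qed
  have sumH: "(\<Sum>x\<in>\<pi> ` ((\<lambda>j. if s j then 2*j+1 else 2*j+2) ` {..<k}). p x)
        = (\<Sum>j<k. if s j then a j else b j)" for s
  proof -
    have "\<pi> ` ((\<lambda>j. if s j then 2*j+1 else 2*j+2) ` {..<k}) = (\<lambda>j. \<pi> (if s j then 2*j+1 else 2*j+2)) ` {..<k}"
      by (rule image_image)
    hence "(\<Sum>x\<in>\<pi> ` ((\<lambda>j. if s j then 2*j+1 else 2*j+2) ` {..<k}). p x)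
       = sum p ((\<lambda>j. \<pi> (if s j then 2*j+1 else 2*j+2)) ` {..<k})" by simp
    also have "\<dots> = sum (p \<circ> (\<lambda>j. \<pi> (if s j then 2*j+1 else 2*j+2))) {..<k}"
      by (rule sum.reindex[OF inj])
    also have "\<dots> = (\<Sum>j<k. if s j then a j else b j)"
      by (rule sum.cong) (simp_all add: a_def b_def)
    finally show ?thesis .
  qed
  have mu: "k * pm = (\<Sum>j<k. (a j + b j)/2)"
  proof -
    have "(\<Sum>x\<in>{1..2*k}. p x) = (\<Sum>x\<in>{1..2*k}. (p \<circ> \<pi>) x)" by (rule sum.permute[OF pi])
    also have "\<dots> = (\<Sum>j<k. a j + b j)" unfolding sum_pairs by (simp add: a_def b_def)
    finally have "(\<Sum>x\<in>{1..2*k}. p x) = (\<Sum>j<k. a j + b j)" .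
    have "(\<Sum>j<k. (a j + b j)/2) = (\<Sum>j<k. a j + b j) / 2" by (simp add: sum_divide_distrib)
    moreover have "real k * pm = (\<Sum>x\<in>{1..2*k}. p x) / 2" unfolding pm using k by simp
    ultimately show ?thesis using \<open>(\<Sum>x\<in>{1..2*k}. p x) = (\<Sum>j<k. a j + b j)\<close> by simp
  qed
  have t: "k * u * pm \<ge> 0" using u pmpos by simp
  have "measure_pmf.prob (Pi_pmf {..<k} False (\<lambda>_. bernoulli_pmf (1/2)))
     {s. \<bar>(\<Sum>j<k. if s j then a j else b j) - (\<Sum>j<k. (a j + b j)/2)\<bar> \<ge> k * u * pm}
      \<le> 2 * exp (-2 * (k * u * pm)^2 / (real k * w^2))"
    by (rule pair_hoeffding[OF k w t ab])
  also have "-2 * (k * u * pm)^2 / (real k * w^2) = - (2*k) * u^2 / (exp (2*\<epsilon>) - 1)^2"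
  proof -
    define E where "E = exp (2*\<epsilon>) - 1"
    have E: "E > 0" using e2 by (simp add: E_def)
    have "-2 * (k * u * pm)^2 / (real k * (E * pm)^2) = - (2*k) * u^2 / E^2"
      using k pmpos E by (simp add: power2_eq_square field_simps)
    thus ?thesis by (simp add: w_def E_def)
  qed
  finally have hb: "measure_pmf.prob (Pi_pmf {..<k} False (\<lambda>_. bernoulli_pmf (1/2)))
     {s. \<bar>(\<Sum>j<k. if s j then a j else b j) - (\<Sum>j<k. (a j + b j)/2)\<bar> \<ge> k * u * pm}
      \<le> 2 * exp (- (2*k) * u^2 / (exp (2*\<epsilon>) - 1)^2)" .
  show "measure_pmf.prob (Pi_pmf {..<k} False (\<lambda>_. bernoulli_pmf (1/2)))
       {s. \<bar>(\<Sum>x\<in>\<pi> ` ((\<lambda>j. if s j then 2*j+1 else 2*j+2) ` {..<k}). p x) - k * pm\<bar> \<ge> k * u * pm} \<le> \<beta>"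
  proof -
    have "{s. \<bar>(\<Sum>x\<in>\<pi> ` ((\<lambda>j. if s j then 2*j+1 else 2*j+2) ` {..<k}). p x) - k * pm\<bar> \<ge> k * u * pm}
       = {s. \<bar>(\<Sum>j<k. if s j then a j else b j) - (\<Sum>j<k. (a j + b j)/2)\<bar> \<ge> k * u * pm}"
      by (simp only: sumH mu)
    thus ?thesis using order_trans[OF hb key] by simp
  qed
qed



lemma pmf_out_dist:
  assumes "finite H" "H \<noteq> {}"
  shows "pmf (out_dist R H) y = (\<Sum>x\<in>H. pmf (R x) y) / card H"
  using assms by (simp add: out_dist_def pmf_bind integral_pmf_of_set)

lemma not_leak:
  fixes q pm v u :: real
  assumes pm: "pm > 0" and v: "v \<ge> 0" and u: "u = 1 - exp (-v)"
    and close: "\<bar>q - pm\<bar> < u * pm"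
  shows "q \<noteq> 0 \<and> \<bar>ln (q / pm)\<bar> \<le> v"
proof -
  have lo: "q / pm > exp (-v)" using close pm u by (simp add: field_simps abs_less_iff)
  have hi0: "q / pm < 2 - exp (-v)" using close pm u by (simp add: field_simps abs_less_iff)
  have "exp v \<ge> 1 + v" "exp (-v) \<ge> 1 - v" using exp_ge_add_one_self[of v] exp_ge_add_one_self[of "-v"] by auto
  hence hi: "q / pm < exp v" using hi0 by linarith
  have qp: "q / pm > 0" using lo by (meson exp_gt_zero less_trans)
  have "ln (q / pm) \<ge> -v" using lo qp by (metis less_eq_real_def ln_exp ln_le_cancel_iff exp_gt_zero)
  moreover have "ln (q / pm) \<le> v" using hi qp by (metis less_eq_real_def ln_exp ln_le_cancel_iff exp_gt_zero)
  ultimately show ?thesis using qp by auto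
qed



theorem mainTheorem7:
  fixes \<epsilon> \<beta> :: real and d n :: nat and R :: "nat \<Rightarrow> nat \<Rightarrow> 'y::countable pmf"
  assumes "\<epsilon> > 0" and "0 < \<beta>" and "\<beta> < 1"
    and "even d"
    and "real d > 4 * (exp (2 * \<epsilon>) - 1)^2 * ln (2 / \<beta>)"
    and "\<forall>i\<in>{1..n}. eps_private \<epsilon> d (R i)"
  shows "measure_pmf.prob (pmf_of_set {H. H \<subseteq> {1..d} \<and> card H = d div 2})
           {H. \<forall>i\<in>{1..n}.
              measure_pmf.prob (out_dist (R i) {1..d})
                (Leak ((exp (2 * \<epsilon>) - 1) * sqrt (4 / real d * ln (2 / \<beta>))) d H (R i))
              < 6 * \<beta> * real n}
         \<ge> 5 / 6"
proof -
  note eps = assms(1) and b0 = assms(2) and b1 = assms(3) and dbig = assms(5) and priv = assms(6)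
  obtain k where dk: "d = 2*k" using assms(4) by blast
  define v where "v = (exp (2 * \<epsilon>) - 1) * sqrt (4 / real d * ln (2 / \<beta>))"
  define u where "u = 1 - exp (-v)"
  have k: "k > 0" and v0: "v \<ge> 0" and u0: "u \<ge> 0"
      and key: "2 * exp (- (2*k) * u^2 / (exp (2*\<epsilon>) - 1)^2) \<le> \<beta>"
    using numerics[OF eps b0 b1 dk dbig, folded v_def, folded u_def] by auto
  define S where "S = {H. H \<subseteq> {1..d} \<and> card H = d div 2}"
  have fS: "finite S" unfolding S_def by (auto intro: finite_subset[of _ "Pow {1..d}"])
  have "{1..k} \<in> S" unfolding S_def dk by auto
  hence SN: "S \<noteq> {}" by auto
  have N: "card S > 0" using fS SN by (simp add: card_gt_0_iff)
  define X where "X i H = measure_pmf.prob (out_dist (R i) {1..d}) (Leak v d H (R i))" for i H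
  have badcard: "real (card {H\<in>S. X i H \<ge> 6 * \<beta> * real n}) \<le> real (card S) / (6 * real n)"
    if i: "i \<in> {1..n}" for i
  proof -
    have pv: "pmf (R i x) y \<le> exp \<epsilon> * pmf (R i x') y" if "x \<in> {1..d}" "x' \<in> {1..d}" for x x' y
    proof -
      have "measure_pmf.prob (R i x) {y} \<le> exp \<epsilon> * measure_pmf.prob (R i x') {y}"
        using priv i that unfolding eps_private_def by blast
      thus ?thesis by (simp add: measure_pmf_single)
    qed
    have cy: "real (card {H\<in>S. y \<in> Leak v d H (R i)}) \<le> \<beta> * real (card S)" for y
    proof (cases "pmf (out_dist (R i) {1..d}) y > 0")
      case False
      hence e: "{H\<in>S. y \<in> Leak v d H (R i)} = {}" by (auto simp: Leak_def)
      show ?thesis unfolding e using b0 by simp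
    next
      case True
      define p where "p x = pmf (R i x) y" for x
      define pm where "pm = pmf (out_dist (R i) {1..d}) y"
      have pm: "pm = (\<Sum>x\<in>{1..2*k}. p x) / (2*k)"
        unfolding pm_def p_def dk by (subst pmf_out_dist) (use k in auto)
      have sub: "{H\<in>S. y \<in> Leak v d H (R i)} \<subseteq>
          {H\<in>{H. H \<subseteq> {1..2*k} \<and> card H = k}. \<bar>(\<Sum>x\<in>H. p x) - k * pm\<bar> \<ge> k * u * pm}"
      proof
        fix H assume H0: "H \<in> {H\<in>S. y \<in> Leak v d H (R i)}"
        hence H: "H \<in> S" "y \<in> Leak v d H (R i)" by auto
        have HS: "H \<subseteq> {1..2*k}" "card H = k" using H(1) unfolding S_def dk by auto
        have "\<bar>(\<Sum>x\<in>H. p x) - k * pm\<bar> \<ge> k * u * pm"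
        proof (rule ccontr)
          assume "\<not> ?thesis"
          hence c: "\<bar>(\<Sum>x\<in>H. p x) - k * pm\<bar> < k * u * pm" by simp
          have cH: "card H = k" "finite H" using H(1) unfolding S_def dk by (auto intro: finite_subset)
          hence Hne: "H \<noteq> {}" using k by auto
          define q where "q = pmf (out_dist (R i) H) y"
          have q: "q = (\<Sum>x\<in>H. p x) / k" unfolding q_def p_def
            by (subst pmf_out_dist) (use cH Hne in auto)
          have "\<bar>q - pm\<bar> < u * pm"
          proof -
            have s: "(\<Sum>x\<in>H. p x) = k * q" using q k by simp
            have "(\<Sum>x\<in>H. p x) - k * pm = k * (q - pm)" unfolding s by (simp add: algebra_simps)
            hence "\<bar>(\<Sum>x\<in>H. p x) - k * pm\<bar> = k * \<bar>q - pm\<bar>" by (simp add: abs_mult)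
            hence "\<bar>q - pm\<bar> = \<bar>(\<Sum>x\<in>H. p x) - k * pm\<bar> / k" using k by simp
            also have "\<dots> < k * u * pm / k" using c k by (intro divide_strict_right_mono) auto
            finally show ?thesis using k by simp
          qed
          from not_leak[OF _ v0 u_def this] True
          have "q \<noteq> 0 \<and> \<bar>ln (q / pm)\<bar> \<le> v" by (simp add: pm_def)
          thus False using H(2) by (auto simp: Leak_def q_def pm_def)
        qed
        thus "H \<in> {H\<in>{H. H \<subseteq> {1..2*k} \<and> card H = k}. \<bar>(\<Sum>x\<in>H. p x) - k * pm\<bar> \<ge> k * u * pm}"
          using HS by simp
      qed
      have fin2: "finite {H\<in>{H. H \<subseteq> {1..2*k} \<and> card H = k}. \<bar>(\<Sum>x\<in>H. p x) - k * pm\<bar> \<ge> k * u * pm}"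
        by (auto intro: finite_subset[of _ "Pow {1..2*k}"])
      have "real (card {H\<in>S. y \<in> Leak v d H (R i)}) \<le>
            real (card {H\<in>{H. H \<subseteq> {1..2*k} \<and> card H = k}. \<bar>(\<Sum>x\<in>H. p x) - k * pm\<bar> \<ge> k * u * pm})"
        using card_mono[OF fin2 sub] by simp
      also have "\<dots> \<le> \<beta> * real (card {H. H \<subseteq> {1..2*k} \<and> card H = k})"
      proof (rule y_bound[OF k eps _ pm _ u0 key])
        show "\<forall>x\<in>{1..2*k}. \<forall>x'\<in>{1..2*k}. p x \<le> exp \<epsilon> * p x'" using pv dk p_def by auto
        show "pm > 0" using True pm_def by simp
      qed
      also have "{H. H \<subseteq> {1..2*k} \<and> card H = k} = S" unfolding S_def dk by simp
      finally show ?thesis .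
    qed
    let ?O = "measure_pmf (out_dist (R i) {1..d})"
    have intI: "integrable ?O (\<lambda>y. indicator (Leak v d H (R i)) y :: real)" for H
      by (rule measure_pmf.integrable_const_bound[where B=1]) (auto simp: indicator_def)
    have "(\<Sum>H\<in>S. X i H) = (\<Sum>H\<in>S. integral\<^sup>L ?O (indicator (Leak v d H (R i))))"
      by (simp add: X_def)
    also have "\<dots> = integral\<^sup>L ?O (\<lambda>y. \<Sum>H\<in>S. indicator (Leak v d H (R i)) y)"
      by (subst Bochner_Integration.integral_sum) (use intI in auto)
    also have "\<dots> \<le> integral\<^sup>L ?O (\<lambda>y. \<beta> * real (card S))"
    proof (rule integral_mono)
      show "integrable ?O (\<lambda>y. \<Sum>H\<in>S. indicator (Leak v d H (R i)) y :: real)"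
        using intI by simp
      show "integrable ?O (\<lambda>y. \<beta> * real (card S))" by simp
      fix y
      have "(\<Sum>H\<in>S. indicator (Leak v d H (R i)) y :: real) = real (card {H\<in>S. y \<in> Leak v d H (R i)})"
        using fS by (simp add: indicator_def sum.If_cases Int_def conj_commute)
      thus "(\<Sum>H\<in>S. indicator (Leak v d H (R i)) y :: real) \<le> \<beta> * real (card S)" using cy by simp
    qed
    also have "\<dots> = \<beta> * real (card S)" by simp
    finally have sumX: "(\<Sum>H\<in>S. X i H) \<le> \<beta> * real (card S)" .
    have n: "n > 0" using i by auto
    have X0: "X i H \<ge> 0" for H by (simp add: X_def)
    have "real (card {H\<in>S. X i H \<ge> 6 * \<beta> * real n}) * (6 * \<beta> * real n)
          = (\<Sum>H\<in>{H\<in>S. X i H \<ge> 6 * \<beta> * real n}. 6 * \<beta> * real n)" by simp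
    also have "\<dots> \<le> (\<Sum>H\<in>{H\<in>S. X i H \<ge> 6 * \<beta> * real n}. X i H)" by (rule sum_mono) auto
    also have "\<dots> \<le> (\<Sum>H\<in>S. X i H)" by (rule sum_mono2) (use fS X0 in auto)
    also have "\<dots> \<le> \<beta> * real (card S)" by (rule sumX)
    finally show ?thesis using b0 n by (simp add: field_simps)
  qed
  define B where "B = (\<Union>i\<in>{1..n}. {H\<in>S. X i H \<ge> 6 * \<beta> * real n})"
  have "real (card B) \<le> (\<Sum>i\<in>{1..n}. real (card {H\<in>S. X i H \<ge> 6 * \<beta> * real n}))"
  proof -
    have "card B \<le> (\<Sum>i\<in>{1..n}. card {H\<in>S. X i H \<ge> 6 * \<beta> * real n})"
      unfolding B_def by (rule card_UN_le) simp
    hence "real (card B) \<le> real (\<Sum>i\<in>{1..n}. card {H\<in>S. X i H \<ge> 6 * \<beta> * real n})"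
      by (simp only: of_nat_le_iff)
    thus ?thesis by simp
  qed
  also have "\<dots> \<le> (\<Sum>i\<in>{1..n}. real (card S) / (6 * real n))" by (rule sum_mono) (rule badcard)
  also have "\<dots> \<le> real (card S) / 6" by (cases "n = 0") simp_all
  finally have cB: "real (card B) \<le> real (card S) / 6" .
  have BS: "B \<subseteq> S" unfolding B_def by auto
  have eqS: "S \<inter> {H. \<forall>i\<in>{1..n}. X i H < 6 * \<beta> * real n} = S - B"
    unfolding B_def by auto
  have "measure_pmf.prob (pmf_of_set S) {H. \<forall>i\<in>{1..n}. X i H < 6 * \<beta> * real n}
        = real (card (S - B)) / real (card S)"
    by (subst measure_pmf_of_set[OF SN fS]) (simp only: eqS)
  also have "real (card (S - B)) = real (card S) - real (card B)"
  proof -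
    have fB: "finite B" using BS fS by (rule finite_subset)
    have "card B \<le> card S" using card_mono[OF fS BS] .
    thus ?thesis using card_Diff_subset[OF fB BS] by (simp add: of_nat_diff)
  qed
  finally have "measure_pmf.prob (pmf_of_set S) {H. \<forall>i\<in>{1..n}. X i H < 6 * \<beta> * real n}
        = (real (card S) - real (card B)) / real (card S)" .
  moreover have "(real (card S) - real (card B)) / real (card S) \<ge> 5/6"
    using cB N by (simp add: field_simps)
  ultimately show ?thesis by (simp add: S_def X_def v_def)
qed


end
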